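(* For $a\ge1$ let $R_a=[0,a]\times[0,1/a]$ and let $\lambda_1(a)$ be the first eigenvalue of the Dirichlet biharmonic (clamped plate) problem on $R_a$. Then $$\lambda_1(a)\ge \omega_1^4\left(a^4+a^{-4}\right)+2\pi^4,$$ where $\omega_1\approx4.73004$ is the first positive root of the equation $\cos(\omega)\cosh(\omega)=1$.
   Context: The clamped plate problem on a domain $\Omega$ is $\Delta^2 u=\lambda u$ in $\Omega$, $u=\partial u/\partial\nu=0$ on $\partial\Omega$; its first eigenvalue is $\lambda_1(\Omega)=\inf_{0\ne u\in H^2_0(\Omega)}\frac{\int_\Omega(\Delta u)^2}{\int_\Omega u^2}$. *)

theory Defs
  imports "HOL-Analysis.Analysis"
begin

definition px :: "(real \<times> real \<Rightarrow> real) \<Rightarrow> real \<times> real \<Rightarrow> real" where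
  "px u p = deriv (\<lambda>t. u (t, snd p)) (fst p)"

definition py :: "(real \<times> real \<Rightarrow> real) \<Rightarrow> real \<times> real \<Rightarrow> real" where
  "py u p = deriv (\<lambda>t. u (fst p, t)) (snd p)"

definition has_cont_partials :: "(real \<times> real \<Rightarrow> real) \<Rightarrow> bool" where
  "has_cont_partials u \<longleftrightarrow>
     (\<forall>p. (\<lambda>t. u (t, snd p)) differentiable (at (fst p)) \<and>
          (\<lambda>t. u (fst p, t)) differentiable (at (snd p))) \<and>
     continuous_on UNIV (px u) \<and> continuous_on UNIV (py u)"

definition C2 :: "(real \<times> real \<Rightarrow> real) \<Rightarrow> bool" where
  "C2 u \<longleftrightarrow> continuous_on UNIV u \<and> has_cont_partials u \<and>
     has_cont_partials (px u) \<and> has_cont_partials (py u)"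

definition laplacian :: "(real \<times> real \<Rightarrow> real) \<Rightarrow> real \<times> real \<Rightarrow> real" where
  "laplacian u p = px (px u) p + py (py u) p"

text \<open>C^2 functions with compact support inside the open set Omega; this class is
  dense in H^2_0(Omega) and contained in it.\<close>
definition C2c :: "(real \<times> real) set \<Rightarrow> (real \<times> real \<Rightarrow> real) set" where
  "C2c \<Omega> = {u. C2 u \<and> (\<exists>K. compact K \<and> K \<subseteq> \<Omega> \<and> (\<forall>p. p \<notin> K \<longrightarrow> u p = 0))}"

definition clamped_lambda1 :: "(real \<times> real) set \<Rightarrow> real" where
  "clamped_lambda1 \<Omega> =
     (INF u \<in> {u \<in> C2c \<Omega>. \<exists>p. u p \<noteq> 0}.
        integral \<Omega> (\<lambda>p. (laplacian u p)^2) / integral \<Omega> (\<lambda>p. (u p)^2))"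

text \<open>Open rectangle (0,a) x (0,1/a); its boundary has measure zero.\<close>
definition rect :: "real \<Rightarrow> (real \<times> real) set" where
  "rect a = {0<..<a} \<times> {0<..<1/a}"

definition omega1 :: real where
  "omega1 = (THE w. w > 0 \<and> cos w * cosh w = 1 \<and>
                    (\<forall>v. 0 < v \<and> v < w \<longrightarrow> cos v * cosh v \<noteq> 1))"

end

theory Submission
  imports Defs
begin

lemma cc_small:
  fixes t :: real assumes "0 < t" "t \<le> 4" shows "cos t * cosh t < 1"
proof (cases "t < pi/2")
  case False
  have "cos (t - pi) \<ge> 0" using False assms pi_gt3
    by (intro cos_ge_zero) auto
  then have "cos t \<le> 0" by (simp add: cos_diff)
  moreover have "cosh t > 0" by (simp add: cosh_real_pos)
  ultimately show ?thesis by (smt (verit) mult_nonpos_nonneg)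
next
  case True
  define g where "g x = sin x * cosh x - cos x * sinh x" for x :: real
  have gpos: "g x > 0" if "0 < x" "x < pi/2" for x
  proof -
    have "\<exists>z>0. z < x \<and> g x - g 0 = (x - 0) * (2 * sin z * sinh z)"
      unfolding g_def
      by (rule MVT2) (use that in \<open>auto intro!: derivative_eq_intros simp: algebra_simps\<close>)
    then obtain z where z: "0 < z" "z < x" "g x - g 0 = x * (2 * sin z * sinh z)" by auto
    have "sin z > 0" using z that pi_gt3 by (intro sin_gt_zero) auto
    moreover have "sinh z > 0" using z by simp
    ultimately show ?thesis using z that by (simp add: g_def)
  qed
  have "\<exists>z>0. z < t \<and> cos t * cosh t - cos 0 * cosh 0 = (t - 0) * (- g z)"
    unfolding g_def
    by (rule MVT2) (use assms in \<open>auto intro!: derivative_eq_intros simp: algebra_simps\<close>)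
  then obtain z where z: "0 < z" "z < t" "cos t * cosh t - 1 = t * (- g z)" by auto
  have "g z > 0" using z True by (intro gpos) auto
  then have "t * g z > 0" using z by simp
  then show ?thesis using z by linarith
qed

lemma omega1_exists:
  "\<exists>w::real. w > 0 \<and> cos w * cosh w = 1 \<and> (\<forall>v. 0 < v \<and> v < w \<longrightarrow> cos v * cosh v \<noteq> 1)"
proof -
  define Z where "Z = {4..2*pi} \<inter> {x. cos x * cosh x = 1}"
  have "closed {x::real. cos x * cosh x = 1}"
    by (intro closed_Collect_eq continuous_intros)
  then have "compact Z" unfolding Z_def by (intro compact_Int_closed) auto
  have "cos 4 * cosh (4::real) \<le> 1" using cc_small[of 4] by simp
  moreover have "1 \<le> cos (2*pi) * cosh (2*pi)" by (simp add: cosh_real_ge_1)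
  moreover have "continuous_on {4..2*pi} (\<lambda>x::real. cos x * cosh x)" by (intro continuous_intros)
  ultimately obtain x where "4 \<le> x" "x \<le> 2*pi" "cos x * cosh x = 1"
    using IVT'[of "\<lambda>x. cos x * cosh x" 4 1 "2*pi"] pi_gt3 by auto
  then have "Z \<noteq> {}" unfolding Z_def by auto
  then obtain w where w: "w \<in> Z" "\<forall>t\<in>Z. w \<le> t" using compact_attains_inf[OF \<open>compact Z\<close>] by auto
  show ?thesis
  proof (intro exI[of _ w] conjI allI impI)
    show "w > 0" using w(1) unfolding Z_def by auto
    show "cos w * cosh w = 1" using w(1) unfolding Z_def by auto
    fix v assume v: "0 < v \<and> v < w"
    show "cos v * cosh v \<noteq> 1"
    proof
      assume eq: "cos v * cosh v = 1"
      have "v > 4" using cc_small[of v] v eq by force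
      then have "v \<in> Z" using v w(1) eq unfolding Z_def by auto
      then show False using w(2) v by force
    qed
  qed
qed

lemma omega1_props:
  "omega1 > 0 \<and> cos omega1 * cosh omega1 = 1 \<and> (\<forall>v. 0 < v \<and> v < omega1 \<longrightarrow> cos v * cosh v \<noteq> 1)"
proof -
  obtain w :: real where w: "w > 0 \<and> cos w * cosh w = 1 \<and> (\<forall>v. 0 < v \<and> v < w \<longrightarrow> cos v * cosh v \<noteq> 1)"
    using omega1_exists by blast
  have "omega1 = w"
    unfolding omega1_def
  proof (rule the_equality)
    show "w > 0 \<and> cos w * cosh w = 1 \<and> (\<forall>v. 0 < v \<and> v < w \<longrightarrow> cos v * cosh v \<noteq> 1)" by (rule w)
    fix y :: real assume y: "y > 0 \<and> cos y * cosh y = 1 \<and> (\<forall>v. 0 < v \<and> v < y \<longrightarrow> cos v * cosh v \<noteq> 1)"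
    show "y = w"
    proof (rule ccontr)
      assume "y \<noteq> w"
      then have "y < w \<or> w < y" by linarith
      then show False using w y by blast
    qed
  qed
  then show ?thesis using w by simp
qed

lemma ftc_real:
  fixes f f' :: "real \<Rightarrow> real"
  assumes "a \<le> b" "\<And>x. a \<le> x \<Longrightarrow> x \<le> b \<Longrightarrow> (f has_real_derivative f' x) (at x)"
  shows "(f' has_integral (f b - f a)) {a..b}"
  using assms by (intro fundamental_theorem_of_calculus)
    (auto simp: has_real_derivative_iff_has_vector_derivative[symmetric] intro: has_field_derivative_at_within)

lemma energy_lemma:
  fixes S P Q R :: "real \<Rightarrow> real"
  assumes "s \<le> t" "\<And>x. s \<le> x \<Longrightarrow> x \<le> t \<Longrightarrow> (S has_real_derivative (P x - Q x - (R x)^2)) (at x)"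
    "S t = S s" "continuous_on {s..t} P" "continuous_on {s..t} Q" "continuous_on {s..t} R"
  shows "integral {s..t} Q \<le> integral {s..t} P"
proof -
  have "((\<lambda>x. P x - Q x - (R x)^2) has_integral (S t - S s)) {s..t}"
    by (rule ftc_real) (use assms in auto)
  then have i0: "integral {s..t} (\<lambda>x. P x - Q x - (R x)^2) = 0" using assms(3) by (simp add: integral_unique)
  have iP: "P integrable_on {s..t}" and iQ: "Q integrable_on {s..t}"
    and iR: "(\<lambda>x. (R x)^2) integrable_on {s..t}"
    using assms(4-6) by (auto intro!: integrable_continuous_interval continuous_intros)
  have "integral {s..t} (\<lambda>x. P x - Q x - (R x)^2) = integral {s..t} P - integral {s..t} Q - integral {s..t} (\<lambda>x. (R x)^2)"
    using iP iQ iR by (simp add: integral_diff integrable_diff)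
  moreover have "integral {s..t} (\<lambda>x. (R x)^2) \<ge> 0" by (rule integral_nonneg) (use iR in auto)
  ultimately show ?thesis using i0 by linarith
qed

lemma wirt_alg:
  fixes G G1 c s \<nu> :: real assumes sx: "s \<noteq> 0" shows
  "((2 * (G1 * G) * (\<nu> * c) - s * \<nu> * \<nu> * G\<^sup>2) * s - \<nu> * c * G\<^sup>2 * (c * \<nu>)) / (s * s) =
     G1\<^sup>2 - \<nu>\<^sup>2 * G\<^sup>2 - (G1 - \<nu> * c * G / s)\<^sup>2"
  by (simp add: field_simps sx power2_eq_square)

lemma wirt_core:
  fixes g g1 :: "real \<Rightarrow> real" and s t L :: real
  assumes "0 < s" "s \<le> t" "t < L"
    and der: "\<And>x. s \<le> x \<Longrightarrow> x \<le> t \<Longrightarrow> (g has_real_derivative g1 x) (at x)"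
    and cg1: "continuous_on {s..t} g1"
    and "g s = 0" "g t = 0"
  shows "(pi/L)^2 * integral {s..t} (\<lambda>x. (g x)^2) \<le> integral {s..t} (\<lambda>x. (g1 x)^2)"
proof -
  define \<nu> where "\<nu> = pi / L"
  have L: "L > 0" using assms by linarith
  have sinpos: "sin (\<nu> * x) > 0" if "s \<le> x" "x \<le> t" for x
  proof -
    have "0 < \<nu> * x" using that assms L by (simp add: \<nu>_def)
    moreover have "\<nu> * x < pi" using that assms L by (simp add: \<nu>_def field_simps)
    ultimately show ?thesis by (rule sin_gt_zero)
  qed
  have sne: "sin (\<nu> * x) \<noteq> 0" if "s \<le> x" "x \<le> t" for x using sinpos[OF that] by simp
  define S where "S x = \<nu> * cos (\<nu> * x) / sin (\<nu> * x) * (g x)^2" for x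
  have cg: "continuous_on {s..t} g"
    using der by (intro continuous_at_imp_continuous_on ballI) (auto intro: DERIV_isCont)
  have ccot: "continuous_on {s..t} (\<lambda>x. \<nu> * cos (\<nu> * x) / sin (\<nu> * x))"
    using sinpos by (intro continuous_intros) (auto simp: less_imp_neq[symmetric])
  have "integral {s..t} (\<lambda>x. \<nu>^2 * (g x)^2) \<le> integral {s..t} (\<lambda>x. (g1 x)^2)"
  proof (rule energy_lemma[where S=S and R="\<lambda>x. g1 x - \<nu> * cos (\<nu> * x) / sin (\<nu> * x) * g x"])
    fix x assume x: "s \<le> x" "x \<le> t"
    have sx: "sin (\<nu> * x) \<noteq> 0" using sinpos[OF x] by simp
    have c: "cos (\<nu> * x) * cos (\<nu> * x) = 1 - sin (\<nu> * x) * sin (\<nu> * x)"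
      by (simp add: cos_squared_eq[unfolded power2_eq_square])
    show "(S has_real_derivative (g1 x)^2 - \<nu>^2 * (g x)^2 - (g1 x - \<nu> * cos (\<nu> * x) / sin (\<nu> * x) * g x)^2) (at x)"
      unfolding S_def
      apply (auto intro!: derivative_eq_intros der x simp: sx)
      by (rule wirt_alg[OF sx])
  next
    show "S t = S s" using assms by (simp add: S_def)
  qed (use assms cg cg1 in \<open>auto intro!: continuous_intros simp: sne\<close>)
  then show ?thesis by (simp add: \<nu>_def)
qed

definition "gA (m::real) (x::real) = cosh (m*x) - cos (m*x)"
definition "gA1 (m::real) (x::real) = m * (sinh (m*x) + sin (m*x))"
definition "gA2 (m::real) (x::real) = m^2 * (cosh (m*x) + cos (m*x))"
definition "gA3 (m::real) (x::real) = m^3 * (sinh (m*x) - sin (m*x))"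
definition "gB (m::real) (x::real) = sinh (m*x) - sin (m*x)"
definition "gB1 (m::real) (x::real) = m * (cosh (m*x) - cos (m*x))"
definition "gB2 (m::real) (x::real) = m^2 * (sinh (m*x) + sin (m*x))"
definition "gB3 (m::real) (x::real) = m^3 * (cosh (m*x) + cos (m*x))"
definition "WW (m::real) (x::real) = gA m x * gB1 m x - gB m x * gA1 m x"

lemma gA_d: "(gA m has_real_derivative gA1 m x) (at x)"
  unfolding gA_def gA1_def by (auto intro!: derivative_eq_intros simp: algebra_simps)
lemma gA1_d: "(gA1 m has_real_derivative gA2 m x) (at x)"
  unfolding gA1_def gA2_def by (auto intro!: derivative_eq_intros simp: algebra_simps power2_eq_square)
lemma gA2_d: "(gA2 m has_real_derivative gA3 m x) (at x)"
  unfolding gA2_def gA3_def by (auto intro!: derivative_eq_intros simp: algebra_simps power2_eq_square power3_eq_cube)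
lemma gA3_d: "(gA3 m has_real_derivative m^4 * gA m x) (at x)"
  unfolding gA3_def gA_def by (auto intro!: derivative_eq_intros simp: algebra_simps power3_eq_cube power4_eq_xxxx)
lemma gB_d: "(gB m has_real_derivative gB1 m x) (at x)"
  unfolding gB_def gB1_def by (auto intro!: derivative_eq_intros simp: algebra_simps)
lemma gB1_d: "(gB1 m has_real_derivative gB2 m x) (at x)"
  unfolding gB1_def gB2_def by (auto intro!: derivative_eq_intros simp: algebra_simps power2_eq_square)
lemma gB2_d: "(gB2 m has_real_derivative gB3 m x) (at x)"
  unfolding gB2_def gB3_def by (auto intro!: derivative_eq_intros simp: algebra_simps power2_eq_square power3_eq_cube)
lemma gB3_d: "(gB3 m has_real_derivative m^4 * gB m x) (at x)"
  unfolding gB3_def gB_def by (auto intro!: derivative_eq_intros simp: algebra_simps power3_eq_cube power4_eq_xxxx)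

lemma WW_eq: "WW m x = 2 * m * (1 - cos (m*x) * cosh (m*x))"
proof -
  have h1: "(cosh (m*x))^2 - (sinh (m*x))^2 = 1" by (rule hyperbolic_pythagoras)
  have h2: "(sin (m*x))^2 + (cos (m*x))^2 = 1" by (rule sin_cos_squared_add)
  show ?thesis unfolding WW_def gA_def gB1_def gB_def gA1_def
    using h1 h2 by algebra
qed

lemma BB_eq: "gB m x * gA3 m x - gA m x * gB3 m x + gA1 m x * gB2 m x - gB1 m x * gA2 m x = 0"
proof -
  have h1: "(cosh (m*x))^2 - (sinh (m*x))^2 = 1" by (rule hyperbolic_pythagoras)
  have h2: "(sin (m*x))^2 + (cos (m*x))^2 = 1" by (rule sin_cos_squared_add)
  show ?thesis unfolding gA_def gA1_def gA2_def gA3_def gB_def gB1_def gB2_def gB3_def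
    using h1 h2 by algebra
qed

lemma WW_ne: assumes "m > 0" "0 < x" "m * x < omega1" shows "WW m x \<noteq> 0"
proof -
  have "cos (m*x) * cosh (m*x) \<noteq> 1" using omega1_props assms by auto
  then show ?thesis using assms by (simp add: WW_eq)
qed

lemma beam_alg:
  fixes f f1 f2 c1 c2 D1 D2 a a1 a2 a3 b b1 b2 b3 m :: real
  assumes "f = c1 * a + c2 * b" "f1 = c1 * a1 + c2 * b1"
    "f2 = D1 * a1 + c1 * a2 + (D2 * b1 + c2 * b2)"
    "f1 = D1 * a + c1 * a1 + (D2 * b + c2 * b1)"
    "b * a3 - a * b3 + a1 * b2 - b1 * a2 = 0"
  shows "f2 * (c1 * a2 + c2 * b2) + f1 * (D1 * a2 + c1 * a3 + D2 * b2 + c2 * b3)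
     - (f1 * (c1 * a3 + c2 * b3) + f * (D1 * a3 + c1 * (m^4 * a) + D2 * b3 + c2 * (m^4 * b)))
    = f2^2 - m^4 * f^2 - (f2 - (c1 * a2 + c2 * b2))^2"
  using assms by algebra

lemma beam_core:
  fixes f f1 f2 :: "real \<Rightarrow> real" and s t m :: real
  assumes st: "0 < s" "s \<le> t" and m: "m > 0" "m * t < omega1"
    and d1: "\<And>x. s \<le> x \<Longrightarrow> x \<le> t \<Longrightarrow> (f has_real_derivative f1 x) (at x)"
    and d2: "\<And>x. s \<le> x \<Longrightarrow> x \<le> t \<Longrightarrow> (f1 has_real_derivative f2 x) (at x)"
    and cf2: "continuous_on {s..t} f2"
    and z: "f s = 0" "f1 s = 0" "f t = 0" "f1 t = 0"
  shows "m^4 * integral {s..t} (\<lambda>x. (f x)^2) \<le> integral {s..t} (\<lambda>x. (f2 x)^2)"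
proof -
  define U where "U = {y. 0 < y \<and> m * y < omega1}"
  have oU: "open U" unfolding U_def
    by (intro open_Collect_conj open_Collect_less continuous_intros)
  have stU: "x \<in> U" if "s \<le> x" "x \<le> t" for x
  proof -
    have "m * x \<le> m * t" using that m by (intro mult_left_mono) auto
    then have "m * x < omega1" using m by linarith
    then show ?thesis using that st m unfolding U_def by auto
  qed
  have Wne: "WW m y \<noteq> 0" if "y \<in> U" for y using that m unfolding U_def by (intro WW_ne) auto
  have Wst: "WW m y \<noteq> 0" if "s \<le> y" "y \<le> t" for y using Wne[OF stU[OF that]] .
  define c1 where "c1 y = (f y * gB1 m y - f1 y * gB m y) / WW m y" for y
  define c2 where "c2 y = (f1 y * gA m y - f y * gA1 m y) / WW m y" for y
  have i1: "f y = c1 y * gA m y + c2 y * gB m y" if "y \<in> U" for y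
  proof -
    have "c1 y * gA m y + c2 y * gB m y = ((f y * gB1 m y - f1 y * gB m y) * gA m y + (f1 y * gA m y - f y * gA1 m y) * gB m y) / WW m y"
      unfolding c1_def c2_def by (simp add: add_divide_distrib)
    also have "(f y * gB1 m y - f1 y * gB m y) * gA m y + (f1 y * gA m y - f y * gA1 m y) * gB m y = f y * WW m y"
      unfolding WW_def by (simp add: algebra_simps)
    finally show ?thesis using Wne[OF that] by simp
  qed
  have i2: "f1 y = c1 y * gA1 m y + c2 y * gB1 m y" if "y \<in> U" for y
  proof -
    have "c1 y * gA1 m y + c2 y * gB1 m y = ((f y * gB1 m y - f1 y * gB m y) * gA1 m y + (f1 y * gA m y - f y * gA1 m y) * gB1 m y) / WW m y"
      unfolding c1_def c2_def by (simp add: add_divide_distrib)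
    also have "(f y * gB1 m y - f1 y * gB m y) * gA1 m y + (f1 y * gA m y - f y * gA1 m y) * gB1 m y = f1 y * WW m y"
      unfolding WW_def by (simp add: algebra_simps)
    finally show ?thesis using Wne[OF that] by simp
  qed
  have cf: "continuous_on {s..t} f"
    using d1 by (intro continuous_at_imp_continuous_on ballI) (auto intro: DERIV_isCont)
  have cf1: "continuous_on {s..t} f1"
    using d2 by (intro continuous_at_imp_continuous_on ballI) (auto intro: DERIV_isCont)
  have cg: "continuous_on A (gA m)" "continuous_on A (gA1 m)" "continuous_on A (gA2 m)"
     "continuous_on A (gB m)" "continuous_on A (gB1 m)" "continuous_on A (gB2 m)" "continuous_on A (WW m)" for A
    unfolding gA_def gA1_def gA2_def gB_def gB1_def gB2_def WW_def
    by (intro continuous_intros)+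
  have cc1: "continuous_on {s..t} c1" and cc2: "continuous_on {s..t} c2"
    unfolding c1_def c2_def using cf cf1 cg Wst
    by (auto intro!: continuous_intros)
  define S where "S y = f1 y * (c1 y * gA2 m y + c2 y * gB2 m y) - f y * (c1 y * gA3 m y + c2 y * gB3 m y)" for y
  have "integral {s..t} (\<lambda>x. m^4 * (f x)^2) \<le> integral {s..t} (\<lambda>x. (f2 x)^2)"
  proof (rule energy_lemma[where S=S and R="\<lambda>x. f2 x - (c1 x * gA2 m x + c2 x * gB2 m x)"])
    fix x assume x: "s \<le> x" "x \<le> t"
    have xU: "x \<in> U" using stU[OF x] .
    have Wx: "WW m x \<noteq> 0" using Wne[OF xU] .
    have dW: "(WW m has_real_derivative (gA1 m x * gB1 m x + gA m x * gB2 m x - (gB1 m x * gA1 m x + gB m x * gA2 m x))) (at x)"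
      unfolding WW_def[abs_def] by (auto intro!: derivative_eq_intros gA_d gA1_d gB_d gB1_d)
    have "\<exists>D1. (c1 has_real_derivative D1) (at x)"
      unfolding c1_def[abs_def] using Wx
      by (intro exI) (auto intro!: derivative_eq_intros d1 d2 x gB_d gB1_d dW)
    then obtain D1 where D1: "(c1 has_real_derivative D1) (at x)" by blast
    have "\<exists>D2. (c2 has_real_derivative D2) (at x)"
      unfolding c2_def[abs_def] using Wx
      by (intro exI) (auto intro!: derivative_eq_intros d1 d2 x gA_d gA1_d dW)
    then obtain D2 where D2: "(c2 has_real_derivative D2) (at x)" by blast
    have e1: "((\<lambda>y. c1 y * gA m y + c2 y * gB m y) has_real_derivative
        D1 * gA m x + c1 x * gA1 m x + (D2 * gB m x + c2 x * gB1 m x)) (at x)"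
      by (auto intro!: derivative_eq_intros D1 D2 gA_d gB_d)
    have e1': "(f has_real_derivative D1 * gA m x + c1 x * gA1 m x + (D2 * gB m x + c2 x * gB1 m x)) (at x)"
      by (rule has_field_derivative_transform_within_open[OF e1 oU xU]) (use i1 in auto)
    have h4: "f1 x = D1 * gA m x + c1 x * gA1 m x + (D2 * gB m x + c2 x * gB1 m x)"
      using DERIV_unique[OF d1[OF x] e1'] .
    have e2: "((\<lambda>y. c1 y * gA1 m y + c2 y * gB1 m y) has_real_derivative
        D1 * gA1 m x + c1 x * gA2 m x + (D2 * gB1 m x + c2 x * gB2 m x)) (at x)"
      by (auto intro!: derivative_eq_intros D1 D2 gA1_d gB1_d)
    have e2': "(f1 has_real_derivative D1 * gA1 m x + c1 x * gA2 m x + (D2 * gB1 m x + c2 x * gB2 m x)) (at x)"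
      by (rule has_field_derivative_transform_within_open[OF e2 oU xU]) (use i2 in auto)
    have h3: "f2 x = D1 * gA1 m x + c1 x * gA2 m x + (D2 * gB1 m x + c2 x * gB2 m x)"
      using DERIV_unique[OF d2[OF x] e2'] .
    have dS: "(S has_real_derivative
       f2 x * (c1 x * gA2 m x + c2 x * gB2 m x) + f1 x * (D1 * gA2 m x + c1 x * gA3 m x + D2 * gB2 m x + c2 x * gB3 m x)
     - (f1 x * (c1 x * gA3 m x + c2 x * gB3 m x) + f x * (D1 * gA3 m x + c1 x * (m^4 * gA m x) + D2 * gB3 m x + c2 x * (m^4 * gB m x)))) (at x)"
      unfolding S_def[abs_def]
      by (auto intro!: derivative_eq_intros d1 d2 x D1 D2 gA2_d gA3_d gB2_d gB3_d simp: algebra_simps)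
    show "(S has_real_derivative (f2 x)^2 - m^4 * (f x)^2 - (f2 x - (c1 x * gA2 m x + c2 x * gB2 m x))^2) (at x)"
      using dS[unfolded beam_alg[OF i1[OF xU] i2[OF xU] h3 h4 BB_eq[of m x], of m]] .
  next
    show "S t = S s" using z by (simp add: S_def)
  qed (use st cf cf2 cc1 cc2 cg in \<open>auto intro!: continuous_intros\<close>)
  then show ?thesis by (simp add: integral_mult_right)
qed

lemma int_supp:
  fixes F :: "real \<Rightarrow> real"
  assumes "\<And>x. x \<in> {c..d} \<Longrightarrow> x \<notin> {p..q} \<Longrightarrow> F x = 0" "{p..q} \<subseteq> {c..d}"
  shows "integral {c..d} F = integral {p..q} F"
proof -
  have "integral {c..d} F = integral {c..d} (\<lambda>x. if x \<in> {p..q} then F x else 0)"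
    using assms(1) by (intro integral_cong) auto
  also have "\<dots> = integral ({p..q} \<inter> {c..d}) F" by (rule integral_restrict_Int)
  also have "{p..q} \<inter> {c..d} = {p..q}" using assms(2) by auto
  finally show ?thesis .
qed

lemma deriv_vanish:
  fixes f :: "real \<Rightarrow> real"
  assumes "(f has_real_derivative D) (at x)" "\<And>y. y < s0 \<or> y > t0 \<Longrightarrow> f y = 0" "x < s0 \<or> x > t0"
  shows "D = 0"
proof (rule DERIV_local_const[OF assms(1)])
  show "0 < (if x < s0 then s0 - x else x - t0)" using assms(3) by auto
  show "\<forall>y. \<bar>x - y\<bar> < (if x < s0 then s0 - x else x - t0) \<longrightarrow> f x = f y"
    using assms(2,3) by (auto split: if_splits simp: abs_if)
qed

lemma beam_1d:
  fixes f f1 f2 :: "real \<Rightarrow> real" and L m s0 t0 :: real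
  assumes "0 < s0" "s0 < t0" "t0 < L" "m > 0" "m * L = omega1"
    and d1: "\<And>x. (f has_real_derivative f1 x) (at x)"
    and d2: "\<And>x. (f1 has_real_derivative f2 x) (at x)"
    and cf2: "continuous_on UNIV f2"
    and supp: "\<And>x. x \<le> s0 \<or> x \<ge> t0 \<Longrightarrow> f x = 0"
  shows "m^4 * integral {0..L} (\<lambda>x. (f x)^2) \<le> integral {0..L} (\<lambda>x. (f2 x)^2)"
proof -
  define s where "s = s0 / 2"
  define t where "t = (t0 + L) / 2"
  have f0: "f x = 0" if "x < s0 \<or> x > t0" for x using supp that by auto
  have f1z: "f1 x = 0" if "x < s0 \<or> x > t0" for x
    by (rule deriv_vanish[OF d1 f0 that])
  have f2z: "f2 x = 0" if "x < s0 \<or> x > t0" for x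
    by (rule deriv_vanish[OF d2 f1z that])
  have st: "0 < s" "s < s0" "t0 < t" "t < L" "s \<le> t" using assms by (auto simp: s_def t_def)
  have "m * t < m * L" using st assms(4) by simp
  then have mt: "m * t < omega1" using assms(5) by linarith
  have core: "m^4 * integral {s..t} (\<lambda>x. (f x)^2) \<le> integral {s..t} (\<lambda>x. (f2 x)^2)"
    by (rule beam_core[of s t m f f1 f2]) (use st assms mt d1 d2 continuous_on_subset[OF cf2] f0 f1z in auto)
  have "integral {0..L} (\<lambda>x. (f x)^2) = integral {s..t} (\<lambda>x. (f x)^2)"
    by (rule int_supp) (use st f0 in auto)
  moreover have "integral {0..L} (\<lambda>x. (f2 x)^2) = integral {s..t} (\<lambda>x. (f2 x)^2)"
    by (rule int_supp) (use st f2z in auto)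
  ultimately show ?thesis using core by simp
qed

lemma wirt_1d:
  fixes g g1 :: "real \<Rightarrow> real" and L s0 t0 :: real
  assumes "0 < s0" "s0 < t0" "t0 < L"
    and d1: "\<And>x. (g has_real_derivative g1 x) (at x)"
    and cg1: "continuous_on UNIV g1"
    and supp: "\<And>x. x \<le> s0 \<or> x \<ge> t0 \<Longrightarrow> g x = 0"
  shows "(pi/L)^2 * integral {0..L} (\<lambda>x. (g x)^2) \<le> integral {0..L} (\<lambda>x. (g1 x)^2)"
proof -
  define s where "s = s0 / 2"
  define t where "t = (t0 + L) / 2"
  have f0: "g x = 0" if "x < s0 \<or> x > t0" for x using supp that by auto
  have f1z: "g1 x = 0" if "x < s0 \<or> x > t0" for x
    by (rule deriv_vanish[OF d1 f0 that])
  have st: "0 < s" "s < s0" "t0 < t" "t < L" "s \<le> t" using assms by (auto simp: s_def t_def)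
  have core: "(pi/L)^2 * integral {s..t} (\<lambda>x. (g x)^2) \<le> integral {s..t} (\<lambda>x. (g1 x)^2)"
    by (rule wirt_core) (use st assms d1 continuous_on_subset[OF cg1] f0 in auto)
  have "integral {0..L} (\<lambda>x. (g x)^2) = integral {s..t} (\<lambda>x. (g x)^2)"
    by (rule int_supp) (use st f0 in auto)
  moreover have "integral {0..L} (\<lambda>x. (g1 x)^2) = integral {s..t} (\<lambda>x. (g1 x)^2)"
    by (rule int_supp) (use st f1z in auto)
  ultimately show ?thesis using core by simp
qed

lemma rect_box: "rect a = box (0,0) (a, 1/a)"
  unfolding rect_def by (auto simp: box_def Basis_prod_def inner_prod_def)

lemma cbox_real: "cbox (a::real) b = {a..b}" by simp

lemma fub1:
  fixes g :: "real \<times> real \<Rightarrow> real"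
  assumes "continuous_on UNIV g"
  shows "integral (cbox (0,0) (a,b)) g = integral {0..a} (\<lambda>x. integral {0..b} (\<lambda>y. g (x,y)))"
  using integral_prod_continuous[of 0 0 a b g] continuous_on_subset[OF assms] by simp

lemma fub2:
  fixes g :: "real \<times> real \<Rightarrow> real"
  assumes "continuous_on UNIV g"
  shows "integral (cbox (0,0) (a,b)) g = integral {0..b} (\<lambda>y. integral {0..a} (\<lambda>x. g (x,y)))"
proof -
  have c: "continuous_on (cbox (0, 0) (a, b)) (\<lambda>(x, y). g (x, y))"
    using continuous_on_subset[OF assms] by simp
  show ?thesis
    using fub1[OF assms, of a b] integral_swap_continuous[of 0 0 a b "\<lambda>x y. g (x,y)", OF c] by simp
qed

lemma int_inner_x:
  fixes g :: "real \<times> real \<Rightarrow> real"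
  assumes "continuous_on UNIV g"
  shows "(\<lambda>x. integral {0..b} (\<lambda>y. g (x,y))) integrable_on {0..a}"
  using integral_integrable_2dim[of 0 0 a b g] continuous_on_subset[OF assms] by simp

lemma int_inner_y:
  fixes g :: "real \<times> real \<Rightarrow> real"
  assumes "continuous_on UNIV g"
  shows "(\<lambda>y. integral {0..a} (\<lambda>x. g (x,y))) integrable_on {0..b}"
proof -
  have "continuous_on UNIV (\<lambda>p. g (snd p, fst p))"
    by (intro continuous_on_compose2[OF assms] continuous_intros) auto
  from int_inner_x[OF this, of a b] show ?thesis by simp
qed

lemma mono_x:
  fixes g1 g2 :: "real \<times> real \<Rightarrow> real"
  assumes "continuous_on UNIV g1" "continuous_on UNIV g2"
    "\<And>x. 0 \<le> x \<Longrightarrow> x \<le> a \<Longrightarrow> integral {0..b} (\<lambda>y. g1 (x,y)) \<le> integral {0..b} (\<lambda>y. g2 (x,y))"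
  shows "integral (cbox (0,0) (a,b)) g1 \<le> integral (cbox (0,0) (a,b)) g2"
  unfolding fub1[OF assms(1)] fub1[OF assms(2)]
  by (rule integral_le[OF int_inner_x[OF assms(1)] int_inner_x[OF assms(2)]]) (use assms(3) in auto)

lemma mono_y:
  fixes g1 g2 :: "real \<times> real \<Rightarrow> real"
  assumes "continuous_on UNIV g1" "continuous_on UNIV g2"
    "\<And>y. 0 \<le> y \<Longrightarrow> y \<le> b \<Longrightarrow> integral {0..a} (\<lambda>x. g1 (x,y)) \<le> integral {0..a} (\<lambda>x. g2 (x,y))"
  shows "integral (cbox (0,0) (a,b)) g1 \<le> integral (cbox (0,0) (a,b)) g2"
  unfolding fub2[OF assms(1)] fub2[OF assms(2)]
  by (rule integral_le[OF int_inner_y[OF assms(1)] int_inner_y[OF assms(2)]]) (use assms(3) in auto)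

lemma eq_x:
  fixes g1 g2 :: "real \<times> real \<Rightarrow> real"
  assumes "continuous_on UNIV g1" "continuous_on UNIV g2"
    "\<And>x. 0 \<le> x \<Longrightarrow> x \<le> a \<Longrightarrow> integral {0..b} (\<lambda>y. g1 (x,y)) = integral {0..b} (\<lambda>y. g2 (x,y))"
  shows "integral (cbox (0,0) (a,b)) g1 = integral (cbox (0,0) (a,b)) g2"
  unfolding fub1[OF assms(1)] fub1[OF assms(2)]
  by (rule integral_cong) (use assms(3) in auto)

lemma eq_y:
  fixes g1 g2 :: "real \<times> real \<Rightarrow> real"
  assumes "continuous_on UNIV g1" "continuous_on UNIV g2"
    "\<And>y. 0 \<le> y \<Longrightarrow> y \<le> b \<Longrightarrow> integral {0..a} (\<lambda>x. g1 (x,y)) = integral {0..a} (\<lambda>x. g2 (x,y))"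
  shows "integral (cbox (0,0) (a,b)) g1 = integral (cbox (0,0) (a,b)) g2"
  unfolding fub2[OF assms(1)] fub2[OF assms(2)]
  by (rule integral_cong) (use assms(3) in auto)

lemma I_cmul: "integral (cbox (0,0) (a,b)) (\<lambda>p. c * g p) = c * integral (cbox (0,0) (a,b)) (g :: real\<times>real \<Rightarrow> real)"
  by (rule integral_mult_right)

lemma I_add:
  fixes g1 g2 :: "real \<times> real \<Rightarrow> real"
  assumes "continuous_on UNIV g1" "continuous_on UNIV g2"
  shows "integral (cbox (0,0) (a,b)) (\<lambda>p. g1 p + g2 p) = integral (cbox (0,0) (a,b)) g1 + integral (cbox (0,0) (a,b)) g2"
  by (rule integral_add) (auto intro!: integrable_continuous continuous_on_subset[OF assms(1)] continuous_on_subset[OF assms(2)])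

lemma slx: "has_cont_partials u \<Longrightarrow> ((\<lambda>t. u (t,y)) has_real_derivative px u (x,y)) (at x)"
  unfolding has_cont_partials_def px_def
  using DERIV_deriv_iff_real_differentiable by (metis fst_conv snd_conv)

lemma sly: "has_cont_partials u \<Longrightarrow> ((\<lambda>t. u (x,t)) has_real_derivative py u (x,y)) (at y)"
  unfolding has_cont_partials_def py_def
  using DERIV_deriv_iff_real_differentiable by (metis fst_conv snd_conv)

lemma cont_slx: "continuous_on UNIV g \<Longrightarrow> continuous_on A (\<lambda>t. g (t,y))"
  by (rule continuous_on_compose2[of UNIV g A "\<lambda>t. (t,y)"]) (auto intro!: continuous_intros)
lemma cont_sly: "continuous_on UNIV g \<Longrightarrow> continuous_on A (\<lambda>t. g (x,t))"
  by (rule continuous_on_compose2[of UNIV g A "\<lambda>t. (x,t)"]) (auto intro!: continuous_intros)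

lemma C2_facts:
  assumes "C2 u"
  shows "continuous_on UNIV u" "has_cont_partials u" "has_cont_partials (px u)" "has_cont_partials (py u)"
    "continuous_on UNIV (px u)" "continuous_on UNIV (py u)"
    "continuous_on UNIV (px (px u))" "continuous_on UNIV (py (py u))"
    "continuous_on UNIV (px (py u))"
  using assms unfolding C2_def has_cont_partials_def by auto

lemma support:
  assumes "u \<in> C2c (rect a)" "a > 0" "u p \<noteq> 0"
  obtains x0 x1 y0 y1 where "0 < x0" "x0 < x1" "x1 < a" "0 < y0" "y0 < y1" "y1 < 1/a"
    "\<And>x y. x \<le> x0 \<or> x \<ge> x1 \<or> y \<le> y0 \<or> y \<ge> y1 \<Longrightarrow> u (x,y) = 0"
proof -
  obtain K where K: "compact K" "K \<subseteq> rect a" "\<And>p. p \<notin> K \<Longrightarrow> u p = 0"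
    using assms(1) unfolding C2c_def by auto
  have "p \<in> K" using K(3) assms(3) by blast
  then have ne: "fst ` K \<noteq> {}" "snd ` K \<noteq> {}" by auto
  have cf: "compact (fst ` K)" "compact (snd ` K)"
    using K(1) by (auto intro!: compact_continuous_image continuous_on_fst continuous_on_snd continuous_on_id)
  obtain mx where mx: "mx \<in> fst ` K" "\<forall>t\<in>fst ` K. mx \<le> t" using compact_attains_inf[OF cf(1) ne(1)] by auto
  obtain Mx where Mx: "Mx \<in> fst ` K" "\<forall>t\<in>fst ` K. t \<le> Mx" using compact_attains_sup[OF cf(1) ne(1)] by auto
  obtain my where my: "my \<in> snd ` K" "\<forall>t\<in>snd ` K. my \<le> t" using compact_attains_inf[OF cf(2) ne(2)] by auto
  obtain My where My: "My \<in> snd ` K" "\<forall>t\<in>snd ` K. t \<le> My" using compact_attains_sup[OF cf(2) ne(2)] by auto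
  have R: "0 < fst q \<and> fst q < a \<and> 0 < snd q \<and> snd q < 1/a" if "q \<in> K" for q
    using K(2) that unfolding rect_def by (auto simp: mem_Times_iff)
  have b1: "0 < mx" "mx < a" "0 < Mx" "Mx < a" "0 < my" "my < 1/a" "0 < My" "My < 1/a"
    using mx(1) Mx(1) my(1) My(1) R by auto
  have b2: "mx \<le> Mx" "my \<le> My" using mx Mx my My by auto
  show ?thesis
  proof (rule that[of "mx/2" "(Mx + a)/2" "my/2" "(My + 1/a)/2"])
    fix x y assume xy: "x \<le> mx / 2 \<or> (Mx + a) / 2 \<le> x \<or> y \<le> my / 2 \<or> (My + 1 / a) / 2 \<le> y"
    show "u (x, y) = 0"
    proof (rule K(3))
      show "(x, y) \<notin> K"
      proof
        assume "(x, y) \<in> K"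
        then have "x \<in> fst ` K" "y \<in> snd ` K" by (metis fst_conv image_eqI, metis snd_conv image_eqI)
        then have "mx \<le> x" "x \<le> Mx" "my \<le> y" "y \<le> My" using mx Mx my My by auto
        then have h: "mx \<le> x" "x \<le> Mx" "my \<le> y" "y \<le> My" by auto
        have "mx/2 < x" using h(1) b1(1) by argo
        moreover have "x < (Mx + a)/2" using h(2) b1(4) by argo
        moreover have "my/2 < y" using h(3) b1(5) by argo
        moreover have "y < (My + 1/a)/2" using h(4) b1(8) by argo
        ultimately show False using xy by argo
      qed
    qed
  qed (use b1 b2 in auto)
qed

locale plate =
  fixes u :: "real \<times> real \<Rightarrow> real" and a b x0 x1 y0 y1 :: real
  assumes C2u: "C2 u"
    and pos: "0 < x0" "x0 < x1" "x1 < a" "0 < y0" "y0 < y1" "y1 < b"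
    and supp: "\<And>x y. x \<le> x0 \<or> x \<ge> x1 \<or> y \<le> y0 \<or> y \<ge> y1 \<Longrightarrow> u (x,y) = 0"
begin

lemmas cu = C2_facts(1)[OF C2u]
lemmas hu = C2_facts(2)[OF C2u]
lemmas hU = C2_facts(3)[OF C2u]
lemmas hV = C2_facts(4)[OF C2u]
lemmas cU = C2_facts(5)[OF C2u]
lemmas cV = C2_facts(6)[OF C2u]
lemmas cUxx = C2_facts(7)[OF C2u]
lemmas cVyy = C2_facts(8)[OF C2u]

lemma V_zero: "x \<le> x0 \<or> x \<ge> x1 \<Longrightarrow> py u (x,y) = 0"
proof -
  assume x: "x \<le> x0 \<or> x \<ge> x1"
  have "(\<lambda>t. u (x,t)) = (\<lambda>t. 0)" using supp x by auto
  then show ?thesis unfolding py_def by simp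
qed

lemma T1: "(omega1/a)^4 * integral (cbox (0,0) (a,b)) (\<lambda>p. (u p)^2)
     \<le> integral (cbox (0,0) (a,b)) (\<lambda>p. (px (px u) p)^2)"
proof -
  have "integral (cbox (0,0) (a,b)) (\<lambda>p. (omega1/a)^4 * (u p)^2) \<le> integral (cbox (0,0) (a,b)) (\<lambda>p. (px (px u) p)^2)"
  proof (rule mono_y)
    fix y
    have "(omega1/a)^4 * integral {0..a} (\<lambda>x. (u (x,y))^2) \<le> integral {0..a} (\<lambda>x. (px (px u) (x,y))^2)"
      by (rule beam_1d[of x0 x1 a "omega1/a" "\<lambda>x. u (x,y)" "\<lambda>x. px u (x,y)" "\<lambda>x. px (px u) (x,y)"])
        (use pos omega1_props supp in \<open>auto intro!: slx hu hU cont_slx cUxx\<close>)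
    then show "integral {0..a} (\<lambda>x. (omega1/a)^4 * (u (x,y))^2) \<le> integral {0..a} (\<lambda>x. (px (px u) (x,y))^2)"
      by simp
  qed (auto intro!: continuous_intros cu cUxx)
  then show ?thesis by (simp add: I_cmul)
qed

lemma T2: "(omega1/b)^4 * integral (cbox (0,0) (a,b)) (\<lambda>p. (u p)^2)
     \<le> integral (cbox (0,0) (a,b)) (\<lambda>p. (py (py u) p)^2)"
proof -
  have "integral (cbox (0,0) (a,b)) (\<lambda>p. (omega1/b)^4 * (u p)^2) \<le> integral (cbox (0,0) (a,b)) (\<lambda>p. (py (py u) p)^2)"
  proof (rule mono_x)
    fix x
    have "(omega1/b)^4 * integral {0..b} (\<lambda>y. (u (x,y))^2) \<le> integral {0..b} (\<lambda>y. (py (py u) (x,y))^2)"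
      by (rule beam_1d[of y0 y1 b "omega1/b" "\<lambda>y. u (x,y)" "\<lambda>y. py u (x,y)" "\<lambda>y. py (py u) (x,y)"])
        (use pos omega1_props supp in \<open>auto intro!: sly hu hV cont_sly cVyy\<close>)
    then show "integral {0..b} (\<lambda>y. (omega1/b)^4 * (u (x,y))^2) \<le> integral {0..b} (\<lambda>y. (py (py u) (x,y))^2)"
      by simp
  qed (auto intro!: continuous_intros cu cVyy)
  then show ?thesis by (simp add: I_cmul)
qed

lemma W1: "(pi/a)^2 * integral (cbox (0,0) (a,b)) (\<lambda>p. (u p)^2)
     \<le> integral (cbox (0,0) (a,b)) (\<lambda>p. (px u p)^2)"
proof -
  have "integral (cbox (0,0) (a,b)) (\<lambda>p. (pi/a)^2 * (u p)^2) \<le> integral (cbox (0,0) (a,b)) (\<lambda>p. (px u p)^2)"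
  proof (rule mono_y)
    fix y
    have "(pi/a)^2 * integral {0..a} (\<lambda>x. (u (x,y))^2) \<le> integral {0..a} (\<lambda>x. (px u (x,y))^2)"
      by (rule wirt_1d[of x0 x1 a "\<lambda>x. u (x,y)" "\<lambda>x. px u (x,y)"])
        (use pos supp in \<open>auto intro!: slx hu cont_slx cU\<close>)
    then show "integral {0..a} (\<lambda>x. (pi/a)^2 * (u (x,y))^2) \<le> integral {0..a} (\<lambda>x. (px u (x,y))^2)"
      by simp
  qed (auto intro!: continuous_intros cu cU)
  then show ?thesis by (simp add: I_cmul)
qed

end

lemma ibp0:
  fixes F F' G G' :: "real \<Rightarrow> real"
  assumes "c \<le> d" "\<And>x. c \<le> x \<Longrightarrow> x \<le> d \<Longrightarrow> (F has_real_derivative F' x) (at x)"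
    "\<And>x. c \<le> x \<Longrightarrow> x \<le> d \<Longrightarrow> (G has_real_derivative G' x) (at x)"
    "continuous_on {c..d} F'" "continuous_on {c..d} G'" "F c = 0" "F d = 0"
  shows "integral {c..d} (\<lambda>x. F x * G' x) = - integral {c..d} (\<lambda>x. F' x * G x)"
proof -
  have cF: "continuous_on {c..d} F"
    using assms(2) by (intro continuous_at_imp_continuous_on ballI) (auto intro: DERIV_isCont)
  have cG: "continuous_on {c..d} G"
    using assms(3) by (intro continuous_at_imp_continuous_on ballI) (auto intro: DERIV_isCont)
  have "((\<lambda>x. F' x * G x + F x * G' x) has_integral (F d * G d - F c * G c)) {c..d}"
    by (rule ftc_real) (use assms in \<open>auto intro!: derivative_eq_intros\<close>)
  then have "integral {c..d} (\<lambda>x. F' x * G x + F x * G' x) = 0" using assms by (simp add: integral_unique)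
  moreover have "integral {c..d} (\<lambda>x. F' x * G x + F x * G' x) = integral {c..d} (\<lambda>x. F' x * G x) + integral {c..d} (\<lambda>x. F x * G' x)"
    by (rule integral_add) (use assms cF cG in \<open>auto intro!: integrable_continuous_interval continuous_intros\<close>)
  ultimately show ?thesis by linarith
qed

lemma shift_int:
  fixes F :: "real \<Rightarrow> real"
  assumes "\<And>x. x < p \<or> x > q \<Longrightarrow> F x = 0" "c \<le> p - h" "q \<le> d" "c \<le> p" "q - h \<le> d" "p \<le> q"
  shows "integral {c..d} (\<lambda>x. F (x + h)) = integral {c..d} F"
proof -
  have "integral {c..d} (\<lambda>x. F (x + h)) = integral {p-h..q-h} (\<lambda>x. F (x + h))"
    by (rule int_supp) (use assms in auto)
  also have "\<dots> = integral {p-h..q-h} (F \<circ> (+) h)" by (simp add: o_def add.commute)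
  also have "\<dots> = integral {p-h+h..q-h+h} F" by (rule integral_shift_Icc_real)
  also have "\<dots> = integral {p..q} F" by simp
  also have "\<dots> = integral {c..d} F"
    by (rule int_supp[symmetric]) (use assms in auto)
  finally show ?thesis .
qed

lemma lin3:
  fixes A B C :: "real \<Rightarrow> real"
  assumes "continuous_on {c..d} A" "continuous_on {c..d} B" "continuous_on {c..d} C"
  shows "integral {c..d} (\<lambda>x. (A x - 2 * B x + C x) / k) = (integral {c..d} A - 2 * integral {c..d} B + integral {c..d} C) / k"
proof -
  have iA: "A integrable_on {c..d}" and iB: "B integrable_on {c..d}" and iC: "C integrable_on {c..d}"
    using assms by (auto intro: integrable_continuous_interval)
  have "integral {c..d} (\<lambda>x. (A x - 2 * B x + C x) / k) = integral {c..d} (\<lambda>x. A x - 2 * B x + C x) / k"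
  proof -
    have "(\<lambda>x. (A x - 2 * B x + C x) / k) = (\<lambda>x. (1/k) * (A x - 2 * B x + C x))" by auto
    then show ?thesis by (simp add: integral_mult_right)
  qed
  also have "integral {c..d} (\<lambda>x. A x - 2 * B x + C x) = integral {c..d} A - 2 * integral {c..d} B + integral {c..d} C"
    using iA iB iC by (simp add: integral_add integral_diff integrable_diff integrable_add integrable_mult_right)
  finally show ?thesis .
qed

lemma shiftc: fixes g :: "real \<times> real \<Rightarrow> real" assumes "continuous_on UNIV g" shows "continuous_on S (\<lambda>p. g (fst p + h, snd p))"
  by (rule continuous_on_compose2[OF assms, of S "\<lambda>p. (fst p + h, snd p)"]) (intro continuous_intros, auto)

lemma shiftcm: fixes g :: "real \<times> real \<Rightarrow> real" assumes "continuous_on UNIV g" shows "continuous_on S (\<lambda>p. g (fst p - h, snd p))"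
  by (rule continuous_on_compose2[OF assms, of S "\<lambda>p. (fst p - h, snd p)"]) (intro continuous_intros, auto)

lemma slshift: fixes g :: "real \<times> real \<Rightarrow> real" assumes "continuous_on UNIV g"
  shows "continuous_on A (\<lambda>t. g (t + h, y))"
  by (rule continuous_on_compose2[OF assms, of A "\<lambda>t. (t + h, y)"]) (intro continuous_intros, auto)

context plate
begin

lemma K1:
  assumes h: "0 < h" "h \<le> x0" "x1 + h \<le> a"
  shows "integral (cbox (0,0) (a,b)) (\<lambda>p. (u (fst p + h, snd p) - 2 * u p + u (fst p + (-h), snd p)) / h^2 * py (py u) p)
       = integral (cbox (0,0) (a,b)) (\<lambda>p. ((py u (fst p + h, snd p) - py u p) / h)^2)"
proof -
  define E where "E p = (py u (fst p + h, snd p) - 2 * py u p + py u (fst p + (-h), snd p)) / h^2" for p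
  have cE: "continuous_on UNIV E" unfolding E_def
    using h(1) by (auto intro!: continuous_intros shiftc[OF cV] shiftcm[OF cV] cV)
  have stepA: "integral (cbox (0,0) (a,b)) (\<lambda>p. (u (fst p + h, snd p) - 2 * u p + u (fst p + (-h), snd p)) / h^2 * py (py u) p)
     = integral (cbox (0,0) (a,b)) (\<lambda>p. - (E p * py u p))"
  proof (rule eq_x)
    fix x
    have "integral {0..b} (\<lambda>y. (u (x + h, y) - 2 * u (x,y) + u (x + (-h), y)) / h^2 * py (py u) (x,y))
       = - integral {0..b} (\<lambda>y. E (x,y) * py u (x,y))"
    proof (rule ibp0[where F="\<lambda>y. (u (x + h, y) - 2 * u (x,y) + u (x + (-h), y)) / h^2" and G="\<lambda>y. py u (x,y)"])
      show "0 \<le> b" using pos by linarith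
    next
      fix y
      show "((\<lambda>y. (u (x + h, y) - 2 * u (x,y) + u (x + (-h), y)) / h^2) has_real_derivative E (x,y)) (at y)"
        unfolding E_def using h(1) by (auto intro!: derivative_eq_intros sly[OF hu] simp: field_simps)
    next
      fix y
      show "((\<lambda>y. py u (x,y)) has_real_derivative py (py u) (x,y)) (at y)" by (rule sly[OF hV])
    next
      show "continuous_on {0..b} (\<lambda>y. E (x,y))" by (rule cont_sly[OF cE])
      show "continuous_on {0..b} (\<lambda>y. py (py u) (x,y))" by (rule cont_sly[OF cVyy])
      show "(u (x + h, 0) - 2 * u (x,0) + u (x + (-h), 0)) / h^2 = 0" using supp pos by simp
      show "(u (x + h, b) - 2 * u (x,b) + u (x + (-h), b)) / h^2 = 0" using supp pos by simp
    qed
    then show "integral {0..b} (\<lambda>y. (u (fst (x,y) + h, snd (x,y)) - 2 * u (x,y) + u (fst (x,y) + (-h), snd (x,y))) / h^2 * py (py u) (x,y))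
      = integral {0..b} (\<lambda>y. - (E (x,y) * py u (x,y)))"
      by (simp add: integral_minus)
  next
    show "continuous_on UNIV (\<lambda>p. (u (fst p + h, snd p) - 2 * u p + u (fst p + (-h), snd p)) / h^2 * py (py u) p)"
      using h(1) by (auto intro!: continuous_intros shiftc[OF cu] shiftcm[OF cu] cu cVyy)
    show "continuous_on UNIV (\<lambda>p. - (E p * py u p))"
      by (intro continuous_intros cE cV)
  qed
  have stepC: "integral (cbox (0,0) (a,b)) (\<lambda>p. - (E p * py u p))
     = integral (cbox (0,0) (a,b)) (\<lambda>p. ((py u (fst p + h, snd p) - py u p) / h)^2)"
  proof (rule eq_y)
    fix y
    define A where "A x = py u (x + h, y) * py u (x, y)" for x
    define B where "B x = py u (x, y) * py u (x, y)" for x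
    define C where "C x = py u (x + (-h), y) * py u (x, y)" for x
    define D where "D x = py u (x + h, y) * py u (x + h, y)" for x
    have cs: "continuous_on {0..a} A" "continuous_on {0..a} B" "continuous_on {0..a} C" "continuous_on {0..a} D"
      unfolding A_def B_def C_def D_def
      by (intro continuous_intros slshift[OF cV] cont_slx[OF cV])+
    have CA: "integral {0..a} C = integral {0..a} A"
    proof -
      have "integral {0..a} (\<lambda>x. C (x + h)) = integral {0..a} C"
        by (rule shift_int[of x0 x1]) (use pos h V_zero in \<open>auto simp: C_def\<close>)
      moreover have "(\<lambda>x. C (x + h)) = A" by (auto simp: A_def C_def fun_eq_iff)
      ultimately show ?thesis by simp
    qed
    have DB: "integral {0..a} D = integral {0..a} B"
    proof -
      have "integral {0..a} (\<lambda>x. B (x + h)) = integral {0..a} B"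
        by (rule shift_int[of x0 x1]) (use pos h V_zero in \<open>auto simp: B_def\<close>)
      moreover have "(\<lambda>x. B (x + h)) = D" by (auto simp: B_def D_def fun_eq_iff)
      ultimately show ?thesis by simp
    qed
    have e1: "integral {0..a} (\<lambda>x. E (x,y) * py u (x,y)) = integral {0..a} (\<lambda>x. (A x - 2 * B x + C x) / h^2)"
      by (rule integral_cong) (simp add: E_def A_def B_def C_def field_simps)
    have e2: "integral {0..a} (\<lambda>x. ((py u (x + h, y) - py u (x,y)) / h)^2) = integral {0..a} (\<lambda>x. (D x - 2 * A x + B x) / h^2)"
      by (rule integral_cong) (simp add: D_def A_def B_def power2_eq_square field_simps)
    have "integral {0..a} (\<lambda>x. E (x,y) * py u (x,y)) = - integral {0..a} (\<lambda>x. ((py u (x + h, y) - py u (x,y)) / h)^2)"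
      unfolding e1 e2 lin3[OF cs(1,2,3)] lin3[OF cs(4,1,2)] CA DB
      using h(1) by (simp add: field_simps)
    then show "integral {0..a} (\<lambda>x. - (E (x,y) * py u (x,y))) = integral {0..a} (\<lambda>x. ((py u (fst (x,y) + h, snd (x,y)) - py u (x,y)) / h)^2)"
      by (simp add: integral_minus)
  next
    show "continuous_on UNIV (\<lambda>p. - (E p * py u p))"
      by (intro continuous_intros cE cV)
    show "continuous_on UNIV (\<lambda>p. ((py u (fst p + h, snd p) - py u p) / h)^2)"
      using h(1) by (auto intro!: continuous_intros shiftc[OF cV] cV)
  qed
  show ?thesis using stepA stepC by simp
qed

lemma K2:
  assumes h: "0 < h"
  shows "(pi/b)^2 * integral (cbox (0,0) (a,b)) (\<lambda>p. ((u (fst p + h, snd p) - u p) / h)^2)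
       \<le> integral (cbox (0,0) (a,b)) (\<lambda>p. ((py u (fst p + h, snd p) - py u p) / h)^2)"
proof -
  have "integral (cbox (0,0) (a,b)) (\<lambda>p. (pi/b)^2 * ((u (fst p + h, snd p) - u p) / h)^2)
       \<le> integral (cbox (0,0) (a,b)) (\<lambda>p. ((py u (fst p + h, snd p) - py u p) / h)^2)"
  proof (rule mono_x)
    fix x
    have "(pi/b)^2 * integral {0..b} (\<lambda>y. ((u (x + h, y) - u (x,y)) / h)^2) \<le> integral {0..b} (\<lambda>y. ((py u (x + h, y) - py u (x,y)) / h)^2)"
    proof (rule wirt_1d[of y0 y1 b])
      fix y
      show "((\<lambda>y. (u (x + h, y) - u (x,y)) / h) has_real_derivative (py u (x + h, y) - py u (x,y)) / h) (at y)"
        using h by (auto intro!: derivative_eq_intros sly[OF hu])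
    next
      show "continuous_on UNIV (\<lambda>y. (py u (x + h, y) - py u (x,y)) / h)"
        using h by (auto intro!: continuous_intros cont_sly[OF cV])
    qed (use pos supp in auto)
    then show "integral {0..b} (\<lambda>y. (pi/b)^2 * ((u (fst (x,y) + h, snd (x,y)) - u (x,y)) / h)^2)
       \<le> integral {0..b} (\<lambda>y. ((py u (fst (x,y) + h, snd (x,y)) - py u (x,y)) / h)^2)"
      by simp
  next
    show "continuous_on UNIV (\<lambda>p. (pi/b)^2 * ((u (fst p + h, snd p) - u p) / h)^2)"
      using h(1) by (auto intro!: continuous_intros shiftc[OF cu] cu)
    show "continuous_on UNIV (\<lambda>p. ((py u (fst p + h, snd p) - py u p) / h)^2)"
      using h(1) by (auto intro!: continuous_intros shiftc[OF cV] cV)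
  qed
  then show ?thesis by (simp add: I_cmul)
qed

end

lemma avg2: fixes A1 A2 P e :: real shows "\<bar>A1 - P\<bar> < e \<Longrightarrow> \<bar>A2 - P\<bar> < e \<Longrightarrow> \<bar>(A1+A2)/2 - P\<bar> < e"
  by (simp add: abs_less_iff field_simps)

lemma taylor2:
  fixes f f1 f2 :: "real \<Rightarrow> real"
  assumes d1: "\<And>t. (f has_real_derivative f1 t) (at t)" and d2: "\<And>t. (f1 has_real_derivative f2 t) (at t)"
    and h: "h > 0"
  shows "\<exists>t1 t2. x < t1 \<and> t1 < x + h \<and> x - h < t2 \<and> t2 < x \<and>
     f (x + h) - 2 * f x + f (x - h) = h^2 / 2 * (f2 t1 + f2 t2)"
proof -
  define diff where "diff m = (if m = 0 then f else if m = 1 then f1 else f2)" for m :: nat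
  have D: "\<forall>m t. m < 2 \<and> x - h \<le> t \<and> t \<le> x + h \<longrightarrow> (diff m has_real_derivative diff (Suc m) t) (at t)"
    using d1 d2 by (auto simp: diff_def less_2_cases_iff)
  have D1: "\<forall>m t. m < 2 \<and> x \<le> t \<and> t \<le> x + h \<longrightarrow> (diff m has_real_derivative diff (Suc m) t) (at t)"
    using D by auto
  have D2: "\<forall>m t. m < 2 \<and> x - h \<le> t \<and> t \<le> x \<longrightarrow> (diff m has_real_derivative diff (Suc m) t) (at t)"
    using D by auto
  obtain t1 where t1: "x < t1" "t1 < x + h"
    "f (x + h) = (\<Sum>m<2. diff m x / fact m * (x + h - x)^m) + diff 2 t1 / fact 2 * (x + h - x)^2"
    using Taylor_up[of 2 diff f x "x + h" x, OF _ _ D1] h by (auto simp: diff_def)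
  obtain t2 where t2: "x - h < t2" "t2 < x"
    "f (x - h) = (\<Sum>m<2. diff m x / fact m * (x - h - x)^m) + diff 2 t2 / fact 2 * (x - h - x)^2"
    using Taylor_down[of 2 diff f "x - h" x x, OF _ _ D2] h by (auto simp: diff_def)
  have "f (x + h) - 2 * f x + f (x - h) = h^2 / 2 * (f2 t1 + f2 t2)"
    using t1(3) t2(3) by (simp add: diff_def numeral_2_eq_2 field_simps power2_eq_square)
  then show ?thesis using t1 t2 by blast
qed

context plate
begin

lemma UL1:
  "uniform_limit (cbox (0,0) (a,b)) (\<lambda>h p. (u (fst p + h, snd p) - u p) / h) (px u) (at_right 0)"
  unfolding uniform_limit_iff
proof (intro allI impI)
  fix e :: real assume e: "e > 0"
  have "uniformly_continuous_on (cbox (-1,0) (a+1,b)) (px u)"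
    by (rule compact_uniformly_continuous[OF continuous_on_subset[OF cU]]) auto
  then obtain d where d: "d > 0" "\<And>p q. p \<in> cbox (-1,0) (a+1,b) \<Longrightarrow> q \<in> cbox (-1,0) (a+1,b) \<Longrightarrow> dist q p < d \<Longrightarrow> dist (px u q) (px u p) < e"
    unfolding uniformly_continuous_on_def using e by metis
  show "\<forall>\<^sub>F h in at_right 0. \<forall>p\<in>cbox (0,0) (a,b). dist ((u (fst p + h, snd p) - u p) / h) (px u p) < e"
    unfolding eventually_at_right_field
  proof (intro exI[of _ "min d 1"] conjI allI impI ballI)
    show "min d 1 > (0::real)" using d by simp
    fix h :: real and p :: "real \<times> real"
    assume h: "0 < h" "h < min d 1" and p: "p \<in> cbox (0,0) (a,b)"
    obtain x y where xy: "p = (x,y)" by (cases p)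
    have "\<exists>z>x. z < x + h \<and> u (x + h, y) - u (x, y) = (x + h - x) * px u (z, y)"
      by (rule MVT2[of x "x + h" "\<lambda>t. u (t,y)" "\<lambda>t. px u (t,y)"]) (use h in \<open>auto intro: slx[OF hu]\<close>)
    then obtain z where z: "x < z" "z < x + h" "u (x + h, y) - u (x, y) = h * px u (z, y)" by auto
    have q: "(z,y) \<in> cbox (-1,0) (a+1,b)" "(x,y) \<in> cbox (-1,0) (a+1,b)" "dist (z,y) (x,y) < d"
      using p xy z h by (auto simp: dist_Pair_Pair dist_real_def)
    have "(u (fst p + h, snd p) - u p) / h = px u (z,y)" using z h xy by simp
    then show "dist ((u (fst p + h, snd p) - u p) / h) (px u p) < e"
      using d(2)[OF q(2) q(1) q(3)] xy by simp
  qed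
qed

lemma UL2:
  "uniform_limit (cbox (0,0) (a,b)) (\<lambda>h p. (u (fst p + h, snd p) - 2 * u p + u (fst p + (-h), snd p)) / h^2 * py (py u) p)
     (\<lambda>p. px (px u) p * py (py u) p) (at_right 0)"
proof -
  have U2: "uniform_limit (cbox (0,0) (a,b)) (\<lambda>h p. (u (fst p + h, snd p) - 2 * u p + u (fst p + (-h), snd p)) / h^2) (px (px u)) (at_right 0)"
    unfolding uniform_limit_iff
  proof (intro allI impI)
    fix e :: real assume e: "e > 0"
    have "uniformly_continuous_on (cbox (-1,0) (a+1,b)) (px (px u))"
      by (rule compact_uniformly_continuous[OF continuous_on_subset[OF cUxx]]) auto
    then obtain d where d: "d > 0" "\<And>p q. p \<in> cbox (-1,0) (a+1,b) \<Longrightarrow> q \<in> cbox (-1,0) (a+1,b) \<Longrightarrow> dist q p < d \<Longrightarrow> dist (px (px u) q) (px (px u) p) < e"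
      unfolding uniformly_continuous_on_def using e by metis
    show "\<forall>\<^sub>F h in at_right 0. \<forall>p\<in>cbox (0,0) (a,b). dist ((u (fst p + h, snd p) - 2 * u p + u (fst p + (-h), snd p)) / h^2) (px (px u) p) < e"
      unfolding eventually_at_right_field
    proof (intro exI[of _ "min d 1"] conjI allI impI ballI)
      show "min d 1 > (0::real)" using d by simp
      fix h :: real and p :: "real \<times> real"
      assume h: "0 < h" "h < min d 1" and p: "p \<in> cbox (0,0) (a,b)"
      obtain x y where xy: "p = (x,y)" by (cases p)
      obtain t1 t2 where t: "x < t1" "t1 < x + h" "x - h < t2" "t2 < x"
        "u (x + h, y) - 2 * u (x,y) + u (x - h, y) = h^2 / 2 * (px (px u) (t1,y) + px (px u) (t2,y))"
        using taylor2[of "\<lambda>t. u (t,y)" "\<lambda>t. px u (t,y)" "\<lambda>t. px (px u) (t,y)" h x] h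
        by (auto intro: slx[OF hu] slx[OF hU])
      have q: "(t1,y) \<in> cbox (-1,0) (a+1,b)" "(t2,y) \<in> cbox (-1,0) (a+1,b)" "(x,y) \<in> cbox (-1,0) (a+1,b)"
        "dist (t1,y) (x,y) < d" "dist (t2,y) (x,y) < d"
        using p xy t h by (auto simp: dist_Pair_Pair dist_real_def)
      have e1: "\<bar>px (px u) (t1,y) - px (px u) (x,y)\<bar> < e" using d(2)[OF q(3) q(1) q(4)] by (simp add: dist_real_def)
      have e2: "\<bar>px (px u) (t2,y) - px (px u) (x,y)\<bar> < e" using d(2)[OF q(3) q(2) q(5)] by (simp add: dist_real_def)
      have qe: "(u (fst p + h, snd p) - 2 * u p + u (fst p + (-h), snd p)) / h^2 = (px (px u) (t1,y) + px (px u) (t2,y)) / 2"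
        using t(5) h xy by (simp add: field_simps)
      show "dist ((u (fst p + h, snd p) - 2 * u p + u (fst p + (-h), snd p)) / h^2) (px (px u) p) < e"
        unfolding dist_real_def qe using avg2[OF e1 e2] xy by simp
    qed
  qed
  have b1: "bounded (px (px u) ` cbox (0,0) (a,b))"
    by (intro compact_imp_bounded compact_continuous_image continuous_on_subset[OF cUxx]) auto
  have b2: "bounded (py (py u) ` cbox (0,0) (a,b))"
    by (intro compact_imp_bounded compact_continuous_image continuous_on_subset[OF cVyy]) auto
  show ?thesis
    using uniform_lim_mult[OF U2 uniform_limit_const[where c="py (py u)"] b1 b2] by simp
qed

end

lemma cdiv: "continuous_on S f \<Longrightarrow> continuous_on S (\<lambda>x. f x / (c::real))"
  for f :: "'a::topological_space \<Rightarrow> real"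
  unfolding divide_inverse by (intro continuous_intros)

context plate
begin

lemma Key: "(pi/b)^2 * integral (cbox (0,0) (a,b)) (\<lambda>p. (px u p)^2)
   \<le> integral (cbox (0,0) (a,b)) (\<lambda>p. px (px u) p * py (py u) p)"
proof -
  have bU: "bounded (px u ` cbox (0,0) (a,b))"
    by (intro compact_imp_bounded compact_continuous_image continuous_on_subset[OF cU]) auto
  have UL1sq: "uniform_limit (cbox (0,0) (a,b)) (\<lambda>h p. (u (fst p + h, snd p) - u p) / h * ((u (fst p + h, snd p) - u p) / h))
      (\<lambda>p. px u p * px u p) (at_right 0)"
    by (rule uniform_lim_mult[OF UL1 UL1 bU bU])
  have c1: "continuous_on (cbox (0,0) (a,b)) (\<lambda>p. (u (fst p + h, snd p) - u p) / h * ((u (fst p + h, snd p) - u p) / h))" for h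
  proof -
    have "continuous_on (cbox (0,0) (a,b)) (\<lambda>p. (u (fst p + h, snd p) - u p) / h)"
      by (rule cdiv) (intro continuous_on_diff shiftc[OF cu] continuous_on_subset[OF cu subset_UNIV])
    then show ?thesis by (intro continuous_on_mult)
  qed
  have c2: "continuous_on (cbox (0,0) (a,b)) (\<lambda>p. (u (fst p + h, snd p) - 2 * u p + u (fst p + (-h), snd p)) / h^2 * py (py u) p)" for h
  proof -
    have "continuous_on (cbox (0,0) (a,b)) (\<lambda>p. (u (fst p + h, snd p) - 2 * u p + u (fst p + (-h), snd p)) / h^2)"
      by (rule cdiv) (intro continuous_on_diff continuous_on_add continuous_on_mult continuous_on_const shiftc[OF cu] continuous_on_subset[OF cu subset_UNIV])
    then show ?thesis by (intro continuous_on_mult continuous_on_subset[OF cVyy subset_UNIV])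
  qed
  obtain I1 J1 where IJ1: "\<And>h. ((\<lambda>p. (u (fst p + h, snd p) - u p) / h * ((u (fst p + h, snd p) - u p) / h)) has_integral I1 h) (cbox (0,0) (a,b))"
    "((\<lambda>p. px u p * px u p) has_integral J1) (cbox (0,0) (a,b))" "(I1 \<longlongrightarrow> J1) (at_right 0)"
    using uniform_limit_integral_cbox[OF UL1sq c1] by auto
  obtain I2 J2 where IJ2: "\<And>h. ((\<lambda>p. (u (fst p + h, snd p) - 2 * u p + u (fst p + (-h), snd p)) / h^2 * py (py u) p) has_integral I2 h) (cbox (0,0) (a,b))"
    "((\<lambda>p. px (px u) p * py (py u) p) has_integral J2) (cbox (0,0) (a,b))" "(I2 \<longlongrightarrow> J2) (at_right 0)"
    using uniform_limit_integral_cbox[OF UL2 c2] by auto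
  have ev: "\<forall>\<^sub>F h in at_right 0. (pi/b)^2 * I1 h \<le> I2 h"
    unfolding eventually_at_right_field
  proof (intro exI[of _ "min x0 (a - x1)"] conjI allI impI)
    show "min x0 (a - x1) > 0" using pos by simp
    fix h :: real assume h: "0 < h" "h < min x0 (a - x1)"
    have "I1 h = integral (cbox (0,0) (a,b)) (\<lambda>p. (u (fst p + h, snd p) - u p) / h * ((u (fst p + h, snd p) - u p) / h))"
      using IJ1(1)[of h] by (rule integral_unique[symmetric])
    also have "(\<lambda>p. (u (fst p + h, snd p) - u p) / h * ((u (fst p + h, snd p) - u p) / h)) = (\<lambda>p. ((u (fst p + h, snd p) - u p) / h)^2)"
      by (rule ext) (rule power2_eq_square[symmetric])
    finally have "I1 h = integral (cbox (0,0) (a,b)) (\<lambda>p. ((u (fst p + h, snd p) - u p) / h)^2)" .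
    moreover have "I2 h = integral (cbox (0,0) (a,b)) (\<lambda>p. (u (fst p + h, snd p) - 2 * u p + u (fst p + (-h), snd p)) / h^2 * py (py u) p)"
      using IJ2(1)[of h] by (rule integral_unique[symmetric])
    moreover have "h \<le> x0" "x1 + h \<le> a" using h by auto
    ultimately show "(pi/b)^2 * I1 h \<le> I2 h" using K1[of h] K2[of h] h by simp
  qed
  have "(pi/b)^2 * J1 \<le> J2"
    by (rule tendsto_le[OF _ IJ2(3) tendsto_mult_left[OF IJ1(3)] ev]) simp
  moreover have "J1 = integral (cbox (0,0) (a,b)) (\<lambda>p. (px u p)^2)"
    using IJ1(2) unfolding power2_eq_square by (rule integral_unique[symmetric])
  moreover have "J2 = integral (cbox (0,0) (a,b)) (\<lambda>p. px (px u) p * py (py u) p)"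
    using IJ2(2) by (rule integral_unique[symmetric])
  ultimately show ?thesis by simp
qed

lemma T3: "(pi/a)^2 * (pi/b)^2 * integral (cbox (0,0) (a,b)) (\<lambda>p. (u p)^2)
   \<le> integral (cbox (0,0) (a,b)) (\<lambda>p. px (px u) p * py (py u) p)"
proof -
  have "(pi/b)^2 * ((pi/a)^2 * integral (cbox (0,0) (a,b)) (\<lambda>p. (u p)^2))
      \<le> (pi/b)^2 * integral (cbox (0,0) (a,b)) (\<lambda>p. (px u p)^2)"
    by (rule mult_left_mono[OF W1]) simp
  then show ?thesis using Key by (simp add: mult_ac)
qed

lemma final: "((omega1/a)^4 + (omega1/b)^4 + 2 * ((pi/a)^2 * (pi/b)^2)) * integral (cbox (0,0) (a,b)) (\<lambda>p. (u p)^2)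
   \<le> integral (cbox (0,0) (a,b)) (\<lambda>p. (laplacian u p)^2)"
proof -
  have cxx: "continuous_on UNIV (\<lambda>p. (px (px u) p)^2)" by (intro continuous_intros cUxx)
  have cyy: "continuous_on UNIV (\<lambda>p. (py (py u) p)^2)" by (intro continuous_intros cVyy)
  have cxy: "continuous_on UNIV (\<lambda>p. 2 * (px (px u) p * py (py u) p))" by (intro continuous_intros cUxx cVyy)
  have "integral (cbox (0,0) (a,b)) (\<lambda>p. (laplacian u p)^2)
      = integral (cbox (0,0) (a,b)) (\<lambda>p. ((px (px u) p)^2 + 2 * (px (px u) p * py (py u) p)) + (py (py u) p)^2)"
    unfolding laplacian_def by (rule integral_cong) (simp add: power2_eq_square algebra_simps)
  also have "\<dots> = integral (cbox (0,0) (a,b)) (\<lambda>p. (px (px u) p)^2) + 2 * integral (cbox (0,0) (a,b)) (\<lambda>p. px (px u) p * py (py u) p)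
       + integral (cbox (0,0) (a,b)) (\<lambda>p. (py (py u) p)^2)"
    by (simp add: I_add[OF continuous_on_add[OF cxx cxy] cyy] I_add[OF cxx cxy] I_cmul)
  finally show ?thesis using T1 T2 T3 by (simp add: algebra_simps)
qed

end

lemma deriv0_sq:
  fixes f :: "real \<Rightarrow> real"
  assumes "\<And>y. \<bar>y\<bar> < 1 \<Longrightarrow> \<bar>f y - f 0\<bar> \<le> C * y^2"
  shows "(f has_real_derivative 0) (at 0)"
proof -
  have "((\<lambda>y. (f y - f 0) / (y - 0)) \<longlongrightarrow> 0) (at 0)"
  proof (rule Lim_null_comparison)
    show "\<forall>\<^sub>F y in at 0. norm ((f y - f 0) / (y - 0)) \<le> \<bar>C\<bar> * \<bar>y\<bar>"
      unfolding eventually_at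
    proof (intro exI[of _ 1] conjI ballI impI)
      fix y :: real assume "y \<in> UNIV" and y: "y \<noteq> 0 \<and> dist y 0 < 1"
      then have y0: "y \<noteq> 0" "\<bar>y\<bar> < 1" by (auto simp: dist_real_def)
      have "\<bar>f y - f 0\<bar> \<le> \<bar>C\<bar> * y^2" using assms[OF y0(2)] by (smt (verit) abs_ge_self mult_right_mono zero_le_power2)
      then have "\<bar>f y - f 0\<bar> / \<bar>y\<bar> \<le> \<bar>C\<bar> * \<bar>y\<bar>"
        using y0 by (simp add: divide_le_eq power2_eq_square abs_mult mult.assoc)
      then show "norm ((f y - f 0) / (y - 0)) \<le> \<bar>C\<bar> * \<bar>y\<bar>" by (simp add: abs_divide)
    qed simp
    show "((\<lambda>y. \<bar>C\<bar> * \<bar>y\<bar>) \<longlongrightarrow> 0) (at 0)"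
      using tendsto_mult_left[OF tendsto_rabs[OF tendsto_ident_at[of 0 UNIV]], of "\<bar>C\<bar>"] by simp
  qed
  then show ?thesis by (simp add: has_field_derivative_iff)
qed

definition "pp s = (max 0 (s::real))^3"
definition "pp1 s = 3 * (max 0 (s::real))^2"
definition "pp2 s = 6 * max 0 (s::real)"

lemma pp_d: "(pp has_real_derivative pp1 s) (at s)"
proof (cases "s = 0")
  case True
  have "(pp has_real_derivative 0) (at 0)"
  proof (rule deriv0_sq[where C=1])
    fix y :: real assume y: "\<bar>y\<bar> < 1"
    show "\<bar>pp y - pp 0\<bar> \<le> 1 * y^2"
    proof (cases "y \<ge> 0")
      case True
      have "y^3 \<le> y^2" using y True by (simp add: power3_eq_cube power2_eq_square mult_left_le)
      then show ?thesis using True by (simp add: pp_def max_def)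
    qed (simp add: pp_def)
  qed
  then show ?thesis using True by (simp add: pp1_def)
next
  case False
  show ?thesis
  proof (cases "s > 0")
    case True
    have d: "((\<lambda>s. s^3) has_real_derivative 3 * s^2) (at s)" by (auto intro!: derivative_eq_intros)
    have "(pp has_real_derivative 3 * s^2) (at s)"
      by (rule has_field_derivative_transform_within_open[OF d, of "{0<..}"]) (use True in \<open>auto simp: pp_def\<close>)
    then show ?thesis using True by (simp add: pp1_def)
  next
    case F2: False
    then have "s < 0" using False by simp
    have d: "((\<lambda>s. 0) has_real_derivative 0) (at s)" by simp
    have "(pp has_real_derivative 0) (at s)"
      by (rule has_field_derivative_transform_within_open[OF d, of "{..<0}"]) (use \<open>s < 0\<close> in \<open>auto simp: pp_def\<close>)
    then show ?thesis using \<open>s < 0\<close> by (simp add: pp1_def)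
  qed
qed

lemma pp1_d: "(pp1 has_real_derivative pp2 s) (at s)"
proof (cases "s = 0")
  case True
  have "(pp1 has_real_derivative 0) (at 0)"
  proof (rule deriv0_sq[where C=3])
    fix y :: real assume y: "\<bar>y\<bar> < 1"
    show "\<bar>pp1 y - pp1 0\<bar> \<le> 3 * y^2"
      by (cases "y \<ge> 0") (simp_all add: pp1_def)
  qed
  then show ?thesis using True by (simp add: pp2_def)
next
  case False
  show ?thesis
  proof (cases "s > 0")
    case True
    have d: "((\<lambda>s. 3 * s^2) has_real_derivative 6 * s) (at s)" by (auto intro!: derivative_eq_intros)
    have "(pp1 has_real_derivative 6 * s) (at s)"
      by (rule has_field_derivative_transform_within_open[OF d, of "{0<..}"]) (use True in \<open>auto simp: pp1_def\<close>)
    then show ?thesis using True by (simp add: pp2_def)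
  next
    case F2: False
    then have "s < 0" using False by simp
    have d: "((\<lambda>s. 0) has_real_derivative 0) (at s)" by simp
    have "(pp1 has_real_derivative 0) (at s)"
      by (rule has_field_derivative_transform_within_open[OF d, of "{..<0}"]) (use \<open>s < 0\<close> in \<open>auto simp: pp1_def\<close>)
    then show ?thesis using \<open>s < 0\<close> by (simp add: pp2_def)
  qed
qed

lemma pp2_c: "continuous_on UNIV pp2" unfolding pp2_def by (intro continuous_intros)

definition "bump al be t = pp ((t - al) * (be - t))"
definition "bump1 al be t = pp1 ((t - al) * (be - t)) * (al + be - 2 * t)"
definition "bump2 al be t = pp2 ((t - al) * (be - t)) * (al + be - 2 * t)^2 - 2 * pp1 ((t - al) * (be - t))"

lemma bump_d: "(bump al be has_real_derivative bump1 al be t) (at t)"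
proof -
  have "((\<lambda>t. pp ((t - al) * (be - t))) has_real_derivative pp1 ((t - al) * (be - t)) * (al + be - 2 * t)) (at t)"
    by (rule DERIV_chain2[OF pp_d]) (auto intro!: derivative_eq_intros simp: algebra_simps)
  then show ?thesis unfolding bump_def[abs_def] bump1_def .
qed

lemma bump1_d: "(bump1 al be has_real_derivative bump2 al be t) (at t)"
proof -
  have d: "((\<lambda>t. pp1 ((t - al) * (be - t))) has_real_derivative pp2 ((t - al) * (be - t)) * (al + be - 2 * t)) (at t)"
    by (rule DERIV_chain2[OF pp1_d]) (auto intro!: derivative_eq_intros simp: algebra_simps)
  show ?thesis unfolding bump1_def[abs_def] bump2_def
    apply (auto intro!: derivative_eq_intros d)
    apply (simp add: power2_eq_square algebra_simps)
    done
qed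

lemma bump_c: "continuous_on UNIV (bump al be)" "continuous_on UNIV (bump1 al be)" "continuous_on UNIV (bump2 al be)"
proof -
  show "continuous_on UNIV (bump al be)"
    using bump_d by (intro continuous_at_imp_continuous_on ballI) (auto intro: DERIV_isCont)
  show "continuous_on UNIV (bump1 al be)"
    using bump1_d by (intro continuous_at_imp_continuous_on ballI) (auto intro: DERIV_isCont)
  have pp1_c: "continuous_on UNIV pp1"
    using pp1_d by (intro continuous_at_imp_continuous_on ballI) (auto intro: DERIV_isCont)
  have q: "continuous_on UNIV (\<lambda>t::real. (t - al) * (be - t))" by (intro continuous_intros)
  have c1: "continuous_on UNIV (\<lambda>t. pp2 ((t - al) * (be - t)))" by (rule continuous_on_compose2[OF pp2_c q]) auto
  have c2: "continuous_on UNIV (\<lambda>t. pp1 ((t - al) * (be - t)))" by (rule continuous_on_compose2[OF pp1_c q]) auto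
  show "continuous_on UNIV (bump2 al be)"
    unfolding bump2_def[abs_def] by (intro continuous_intros c1 c2)
qed

lemma bump_zero: "t \<le> al \<or> t \<ge> be \<Longrightarrow> al \<le> be \<Longrightarrow> bump al be t = 0"
proof -
  assume t: "t \<le> al \<or> t \<ge> be" "al \<le> be"
  then have "(t - al) * (be - t) \<le> 0"
    by (auto intro: mult_nonpos_nonneg mult_nonneg_nonpos)
  then show ?thesis by (simp add: bump_def pp_def max_def)
qed

lemma bump_pos: "al < be \<Longrightarrow> bump al be ((al + be)/2) > 0"
proof -
  assume "al < be"
  have "((al + be)/2 - al) * (be - (al + be)/2) = ((be - al)/2)^2" by (simp add: field_simps power2_eq_square)
  moreover have "((be - al)/2)^2 > 0" using \<open>al < be\<close> by simp
  ultimately have "((al + be)/2 - al) * (be - (al + be)/2) > 0" by simp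
  then show ?thesis by (simp add: bump_def pp_def)
qed

lemma px_prod:
  assumes "\<And>t. (F has_real_derivative F1 t) (at t)"
  shows "px (\<lambda>p. F (fst p) * G (snd p)) = (\<lambda>p. F1 (fst p) * G (snd p))"
proof
  fix p :: "real \<times> real"
  have "((\<lambda>t. F t * G (snd p)) has_real_derivative F1 (fst p) * G (snd p)) (at (fst p))"
    by (auto intro!: derivative_eq_intros assms)
  then show "px (\<lambda>p. F (fst p) * G (snd p)) p = F1 (fst p) * G (snd p)"
    unfolding px_def by (simp add: DERIV_imp_deriv)
qed

lemma py_prod:
  assumes "\<And>t. (G has_real_derivative G1 t) (at t)"
  shows "py (\<lambda>p. F (fst p) * G (snd p)) = (\<lambda>p. F (fst p) * G1 (snd p))"
proof
  fix p :: "real \<times> real"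
  have "((\<lambda>t. F (fst p) * G t) has_real_derivative F (fst p) * G1 (snd p)) (at (snd p))"
    by (auto intro!: derivative_eq_intros assms)
  then show "py (\<lambda>p. F (fst p) * G (snd p)) p = F (fst p) * G1 (snd p)"
    unfolding py_def by (simp add: DERIV_imp_deriv)
qed

lemma cont_prod:
  fixes F G :: "real \<Rightarrow> real"
  assumes "continuous_on UNIV F" "continuous_on UNIV G"
  shows "continuous_on UNIV (\<lambda>p::real\<times>real. F (fst p) * G (snd p))"
proof -
  have f: "continuous_on UNIV (\<lambda>p::real\<times>real. fst p)" "continuous_on UNIV (\<lambda>p::real\<times>real. snd p)"
    by (intro continuous_intros)+
  have "continuous_on UNIV (\<lambda>p::real\<times>real. F (fst p))" by (rule continuous_on_compose2[OF assms(1) f(1)]) auto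
  moreover have "continuous_on UNIV (\<lambda>p::real\<times>real. G (snd p))" by (rule continuous_on_compose2[OF assms(2) f(2)]) auto
  ultimately show ?thesis by (rule continuous_on_mult)
qed

lemma hcp_prod:
  assumes dF: "\<And>t. (F has_real_derivative F1 t) (at t)" and dG: "\<And>t. (G has_real_derivative G1 t) (at t)"
    and c: "continuous_on UNIV F" "continuous_on UNIV G" "continuous_on UNIV F1" "continuous_on UNIV G1"
  shows "has_cont_partials (\<lambda>p. F (fst p) * G (snd p))"
  unfolding has_cont_partials_def px_prod[OF dF] py_prod[OF dG]
proof (intro conjI allI)
  fix p :: "real \<times> real"
  show "(\<lambda>t. F (fst (t, snd p)) * G (snd (t, snd p))) differentiable at (fst p)"
    using dF by (auto simp: real_differentiable_def intro!: exI derivative_eq_intros)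
  show "(\<lambda>t. F (fst (fst p, t)) * G (snd (fst p, t))) differentiable at (snd p)"
    using dG by (auto simp: real_differentiable_def intro!: exI derivative_eq_intros)
qed (use c in \<open>auto intro!: cont_prod\<close>)

lemma bump_exists:
  assumes "a > 0"
  shows "\<exists>u \<in> C2c (rect a). \<exists>p. u p \<noteq> 0"
proof -
  define b where "b = 1/a"
  have b: "b > 0" using assms by (simp add: b_def)
  define A where "A = bump (a/4) (3*a/4)"
  define A1 where "A1 = bump1 (a/4) (3*a/4)"
  define A2 where "A2 = bump2 (a/4) (3*a/4)"
  define B where "B = bump (b/4) (3*b/4)"
  define B1 where "B1 = bump1 (b/4) (3*b/4)"
  define B2 where "B2 = bump2 (b/4) (3*b/4)"
  define u where "u p = A (fst p) * B (snd p)" for p :: "real \<times> real"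
  have dA: "\<And>t. (A has_real_derivative A1 t) (at t)" "\<And>t. (A1 has_real_derivative A2 t) (at t)"
    unfolding A_def A1_def A2_def by (rule bump_d bump1_d)+
  have dB: "\<And>t. (B has_real_derivative B1 t) (at t)" "\<And>t. (B1 has_real_derivative B2 t) (at t)"
    unfolding B_def B1_def B2_def by (rule bump_d bump1_d)+
  have cA: "continuous_on UNIV A" "continuous_on UNIV A1" "continuous_on UNIV A2"
    unfolding A_def A1_def A2_def by (rule bump_c)+
  have cB: "continuous_on UNIV B" "continuous_on UNIV B1" "continuous_on UNIV B2"
    unfolding B_def B1_def B2_def by (rule bump_c)+
  have uf: "u = (\<lambda>p. A (fst p) * B (snd p))" by (simp add: u_def[abs_def])
  have "C2 u"
    unfolding C2_def uf px_prod[OF dA(1)] py_prod[OF dB(1)]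
    by (intro conjI cont_prod cA cB hcp_prod[OF dA(1) dB(1) cA(1) cB(1) cA(2) cB(2)]
      hcp_prod[OF dA(2) dB(1) cA(2) cB(1) cA(3) cB(2)] hcp_prod[OF dA(1) dB(2) cA(1) cB(2) cA(2) cB(3)])
  moreover have "\<exists>K. compact K \<and> K \<subseteq> rect a \<and> (\<forall>p. p \<notin> K \<longrightarrow> u p = 0)"
  proof (intro exI[of _ "cbox (a/4, b/4) (3*a/4, 3*b/4)"] conjI allI impI)
    show "compact (cbox (a/4, b/4) (3*a/4, 3*b/4))" by simp
    show "cbox (a/4, b/4) (3*a/4, 3*b/4) \<subseteq> rect a"
      using assms b unfolding rect_def b_def[symmetric] by (auto simp: cbox_Pair_eq)
    fix p :: "real \<times> real" assume "p \<notin> cbox (a/4, b/4) (3*a/4, 3*b/4)"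
    then have "fst p \<le> a/4 \<or> fst p \<ge> 3*a/4 \<or> snd p \<le> b/4 \<or> snd p \<ge> 3*b/4"
      by (cases p) (auto simp: cbox_Pair_eq)
    then show "u p = 0"
      using assms b bump_zero[of "fst p" "a/4" "3*a/4"] bump_zero[of "snd p" "b/4" "3*b/4"]
      unfolding u_def A_def B_def by auto
  qed
  ultimately have "u \<in> C2c (rect a)" unfolding C2c_def by auto
  moreover have "u (a/2, b/2) \<noteq> 0"
  proof -
    have "A (a/2) > 0" using bump_pos[of "a/4" "3*a/4"] assms unfolding A_def by (simp add: field_simps)
    moreover have "B (b/2) > 0" using bump_pos[of "b/4" "3*b/4"] b unfolding B_def by (simp add: field_simps)
    ultimately show ?thesis by (simp add: u_def)
  qed
  ultimately show ?thesis by blast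
qed

theorem mainTheorem4:
  fixes a :: real
  assumes "a \<ge> 1"
  shows "clamped_lambda1 (rect a) \<ge> omega1 ^ 4 * (a ^ 4 + 1 / a ^ 4) + 2 * pi ^ 4"
proof -
  have a0: "a > 0" using assms by simp
  show ?thesis
    unfolding clamped_lambda1_def
  proof (rule cINF_greatest)
    show "{u \<in> C2c (rect a). \<exists>p. u p \<noteq> 0} \<noteq> {}" using bump_exists[OF a0] by auto
  next
    fix u assume u: "u \<in> {u \<in> C2c (rect a). \<exists>p. u p \<noteq> 0}"
    then obtain p where p: "u p \<noteq> 0" by auto
    have uC: "u \<in> C2c (rect a)" using u by auto
    obtain x0 x1 y0 y1 where s: "0 < x0" "x0 < x1" "x1 < a" "0 < y0" "y0 < y1" "y1 < 1/a"
      "\<And>x y. x \<le> x0 \<or> x \<ge> x1 \<or> y \<le> y0 \<or> y \<ge> y1 \<Longrightarrow> u (x,y) = 0"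
      using support[OF uC a0 p] by blast
    have C2u: "C2 u" using uC unfolding C2c_def by auto
    interpret plate u a "1/a" x0 x1 y0 y1
      by unfold_locales (use C2u s in auto)
    have ir: "integral (rect a) g = integral (cbox (0,0) (a,1/a)) g" for g :: "real \<times> real \<Rightarrow> real"
      unfolding rect_box by (rule integral_open_interval)
    define Iu where "Iu = integral (cbox (0,0) (a,1/a)) (\<lambda>p. (u p)^2)"
    have cu2: "continuous_on (cbox (0,0) (a,1/a)) (\<lambda>p. (u p)^2)"
      by (intro continuous_intros continuous_on_subset[OF cu subset_UNIV])
    have Iu0: "Iu \<ge> 0" unfolding Iu_def
      by (rule integral_nonneg) (auto intro: integrable_continuous[OF cu2])
    have "Iu \<noteq> 0"
    proof
      assume "Iu = 0"
      then have hi: "((\<lambda>p. (u p)^2) has_integral 0) (cbox (0,0) (a,1/a))"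
        unfolding Iu_def using integrable_continuous[OF cu2] by (metis has_integral_integral)
      have pin: "p \<in> cbox (0,0) (a,1/a)"
      proof -
        obtain x y where xy: "p = (x,y)" by (cases p)
        have "\<not> (x \<le> x0 \<or> x \<ge> x1 \<or> y \<le> y0 \<or> y \<ge> y1)" using s(7)[of x y] p xy by auto
        then show ?thesis using xy s by (auto simp: cbox_Pair_eq)
      qed
      have ne: "box (0::real, 0::real) (a, 1/a) \<noteq> {}" using a0 by (auto simp: box_ne_empty inner_Pair_0 Basis_prod_def)
      have "(u p)^2 = 0"
        by (rule has_integral_0_cbox_imp_0[OF cu2 _ hi ne pin]) simp
      then show False using p by simp
    qed
    then have Ipos: "Iu > 0" using Iu0 by simp
    have fin: "((omega1/a)^4 + (omega1/(1/a))^4 + 2 * ((pi/a)^2 * (pi/(1/a))^2)) * Iu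
        \<le> integral (cbox (0,0) (a,1/a)) (\<lambda>p. (laplacian u p)^2)"
      using final unfolding Iu_def .
    have ceq: "(omega1/a)^4 + (omega1/(1/a))^4 + 2 * ((pi/a)^2 * (pi/(1/a))^2) = omega1 ^ 4 * (a ^ 4 + 1 / a ^ 4) + 2 * pi ^ 4"
      using a0 by (simp add: field_simps power2_eq_square power4_eq_xxxx)
    show "omega1 ^ 4 * (a ^ 4 + 1 / a ^ 4) + 2 * pi ^ 4
        \<le> integral (rect a) (\<lambda>p. (laplacian u p)^2) / integral (rect a) (\<lambda>p. (u p)^2)"
      unfolding ir Iu_def[symmetric] using fin ceq Ipos by (simp add: pos_le_divide_eq)
  qed
qed

end
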